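(* There is an absolute constant $c_0>0$ such that the following holds. Let $\mathcal D$ be a distribution on $\mathbb R^d\times\{\pm1\}$ whose $x$-marginal is $(3,L,R,\beta)$-well-behaved, let $w\in\mathbb R^d$ be a unit vector, $\rho\in(0,1]$, and $B=\{x:\langle x,w\rangle\in[\rho R/2,\rho R/\sqrt2]\}$. Let $v\in w^\perp$ and $t_1,t_2>0$ be such that $$\mathbb E_{(z,y)\sim\mathcal D_B^{\pi_w}}\big[\mathbf 1\{-t_1\le\langle v,z\rangle\le-t_2\}\,y\big]<-C'$$ for some $C'>0$. Define $T_w(x)=\frac{1}{\langle w,x\rangle}\mathbf 1\{x\in B,\ -t_1\le\langle v,\pi_w(x)\rangle\le-t_2\}$ (and $T_w(x)=0$ for $x\notin B$). Then $\mathbb E_{(x,y)\sim\mathcal D}[T_w(x)\,y\,\langle w,x\rangle]\le-c_0\,C'\,L\,R^3\rho$.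
   Context: For a unit vector $w$ and $x$ with $\langle w,x\rangle\ne0$, the perspective projection is $\pi_w(x)=\mathrm{proj}_{w^\perp}\big(x/\langle w,x\rangle\big)$, where $\mathrm{proj}_{w^\perp}$ is orthogonal projection onto $w^\perp=\{u:\langle u,w\rangle=0\}$. For a set $B$ and a map $q$, $\mathcal D_B$ is $\mathcal D$ conditioned on $x\in B$, and $\mathcal D_B^{q}$ is the distribution of $(q(x),y)$ for $(x,y)\sim\mathcal D_B$. For $k\in\mathbb Z_+$, $L,R>0$, $\beta\ge1$, a distribution $\mathcal D_x$ on $\mathbb R^d$ is $(k,L,R,\beta)$-well-behaved if (i) for every $k$-dimensional subspace $V$ the projection of $\mathcal D_x$ onto $V$ has a density $\gamma_V$ on $V$ with $\gamma_V(x)\ge L$ for all $x\in V$, $\|x\|_2\le R$; and (ii) for every unit vector $w$ and every $t>0$, $\Pr_{x\sim\mathcal D_x}[|\langle w,x\rangle|\ge t]\le\exp(1-t/\beta)$. *)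

theory Defs
  imports "HOL-Probability.Probability"
begin

text \<open>Points of R^d are represented as functions nat => real vanishing from index d on,
  so that the dimension d can be quantified inside the formula (the constant c0 is absolute).\<close>

definition Rd :: "nat \<Rightarrow> (nat \<Rightarrow> real) set" where
  "Rd d = {x. \<forall>i\<ge>d. x i = 0}"

definition inner_d :: "nat \<Rightarrow> (nat \<Rightarrow> real) \<Rightarrow> (nat \<Rightarrow> real) \<Rightarrow> real" where
  "inner_d d u x = (\<Sum>i<d. u i * x i)"

definition proj_perp :: "nat \<Rightarrow> (nat \<Rightarrow> real) \<Rightarrow> (nat \<Rightarrow> real) \<Rightarrow> (nat \<Rightarrow> real)" where
  "proj_perp d w u = (\<lambda>i. u i - inner_d d u w * w i)"

definition persp :: "nat \<Rightarrow> (nat \<Rightarrow> real) \<Rightarrow> (nat \<Rightarrow> real) \<Rightarrow> (nat \<Rightarrow> real)" where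
  "persp d w x = proj_perp d w (\<lambda>i. x i / inner_d d w x)"

text \<open>A k-dimensional subspace V is described by an orthonormal basis u;
  the projection onto V is identified with R^k via the coordinates w.r.t. u
  (a linear isometry), and Lebesgue measure on V with lborel on real^'k.\<close>
definition well_behaved :: "'k::finite itself \<Rightarrow> nat \<Rightarrow> (nat \<Rightarrow> real) measure \<Rightarrow> real \<Rightarrow> real \<Rightarrow> real \<Rightarrow> bool" where
  "well_behaved _ d Dx L R \<beta> \<longleftrightarrow>
     (\<forall>u :: 'k \<Rightarrow> (nat \<Rightarrow> real).
        (\<forall>i. u i \<in> Rd d) \<and> (\<forall>i j. inner_d d (u i) (u j) = (if i = j then 1 else 0)) \<longrightarrow>
        (\<exists>\<gamma> :: real^'k \<Rightarrow> real.
           \<gamma> \<in> borel_measurable borel \<and> (\<forall>z. 0 \<le> \<gamma> z) \<and>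
           distr Dx lborel (\<lambda>x. \<chi> i. inner_d d (u i) x) = density lborel (\<lambda>z. ennreal (\<gamma> z)) \<and>
           (\<forall>z. norm z \<le> R \<longrightarrow> L \<le> \<gamma> z))) \<and>
     (\<forall>w \<in> Rd d. inner_d d w w = 1 \<longrightarrow>
        (\<forall>t>0. measure Dx {x. \<bar>inner_d d w x\<bar> \<ge> t} \<le> exp (1 - t / \<beta>)))"

definition cond_meas :: "'a measure \<Rightarrow> 'a set \<Rightarrow> 'a measure" where
  "cond_meas M A = density M (\<lambda>p. ennreal (indicator A p / measure M A))"

definition cond_push :: "((nat \<Rightarrow> real) \<times> real) measure \<Rightarrow> (nat \<Rightarrow> real) set
     \<Rightarrow> ((nat \<Rightarrow> real) \<Rightarrow> (nat \<Rightarrow> real)) \<Rightarrow> ((nat \<Rightarrow> real) \<times> real) measure" where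
  "cond_push M B q = distr (cond_meas M {p. fst p \<in> B}) borel (\<lambda>p. (q (fst p), snd p))"

end

theory Submission
  imports Defs
begin

lemma inner_d_comm: "inner_d d u x = inner_d d x u"
  unfolding inner_d_def by (simp add: mult.commute)

lemma inner_d_cont: "continuous_on UNIV (\<lambda>x. inner_d d u x)"
  unfolding inner_d_def by (intro continuous_intros continuous_on_product_coordinates)

lemma inner_d_cont2: "continuous_on UNIV (\<lambda>x. inner_d d x u)"
  unfolding inner_d_def by (intro continuous_intros continuous_on_product_coordinates)

lemma inner_d_meas[measurable]: "(\<lambda>x. inner_d d u x) \<in> borel_measurable borel"
  by (rule borel_measurable_continuous_onI[OF inner_d_cont])

lemma inner_d_meas2[measurable]: "(\<lambda>x. inner_d d x u) \<in> borel_measurable borel"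
  by (rule borel_measurable_continuous_onI[OF inner_d_cont2])

lemma persp_meas[measurable]: "persp d w \<in> borel_measurable borel"
proof (rule measurable_coordinatewise_then_product)
  fix i
  show "(\<lambda>x. persp d w x i) \<in> borel_measurable borel"
    unfolding persp_def proj_perp_def inner_d_def by measurable
qed

lemma fst_meas[measurable]: "(fst :: ('a::topological_space \<times> 'b::topological_space) \<Rightarrow> 'a) \<in> borel_measurable borel"
  by (rule borel_measurable_continuous_onI[OF continuous_on_fst[OF continuous_on_id]])
lemma snd_meas[measurable]: "(snd :: ('a::topological_space \<times> 'b::topological_space) \<Rightarrow> 'b) \<in> borel_measurable borel"
  by (rule borel_measurable_continuous_onI[OF continuous_on_snd[OF continuous_on_id]])

lemma pair_meas: "(\<lambda>p::(nat\<Rightarrow>real)\<times>real. (persp d w (fst p), snd p)) \<in> borel_measurable borel"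
  by measurable

lemma setB: "{x. a \<le> inner_d d x w \<and> inner_d d x w \<le> b} \<in> sets borel"
  by measurable

lemma setS: "{x. a \<le> inner_d d v x \<and> inner_d d v x \<le> b} \<in> sets borel"
  by measurable


definition ev :: "nat \<Rightarrow> nat \<Rightarrow> real" where "ev k = (\<lambda>i. if i = k then 1 else 0)"

lemma inner_ev: "k < d \<Longrightarrow> inner_d d (ev k) x = x k"
proof -
  assume "k < d"
  have "inner_d d (ev k) x = (\<Sum>i<d. if i = k then x k else 0)"
    unfolding inner_d_def ev_def by (rule sum.cong) auto
  then show ?thesis using \<open>k < d\<close> by simp
qed

lemma inner_d_diff: "inner_d d (\<lambda>i. a i - b i) x = inner_d d a x - inner_d d b x"
  unfolding inner_d_def by (simp add: algebra_simps sum_subtractf)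
lemma inner_d_diff2: "inner_d d x (\<lambda>i. a i - b i) = inner_d d x a - inner_d d x b"
  unfolding inner_d_def by (simp add: algebra_simps sum_subtractf)

lemma inner_d_lin: "inner_d d (\<lambda>i. a i - c * b i) x = inner_d d a x - c * inner_d d b x"
  unfolding inner_d_def by (simp add: algebra_simps sum_subtractf sum_distrib_left)

lemma inner_d_lin2: "inner_d d x (\<lambda>i. a i - c * b i) = inner_d d x a - c * inner_d d x b"
  unfolding inner_d_def by (simp add: algebra_simps sum_subtractf sum_distrib_left)

definition hv :: "(nat \<Rightarrow> real) \<Rightarrow> nat \<Rightarrow> real" where "hv w = (\<lambda>i. ev 0 i - w i)"
definition hh :: "nat \<Rightarrow> (nat \<Rightarrow> real) \<Rightarrow> nat \<Rightarrow> nat \<Rightarrow> real" where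
  "hh d w k = (\<lambda>i. ev k i - (2 * hv w k / inner_d d (hv w) (hv w)) * hv w i)"

lemma hh_orth:
  assumes "j < d" "k < d"
  shows "inner_d d (hh d w j) (hh d w k) = (if j = k then 1 else 0)"
proof -
  define n where "n = inner_d d (hv w) (hv w)"
  have e: "inner_d d (ev j) (ev k) = (if j = k then 1 else 0)"
    using assms by (simp add: inner_ev) (simp add: ev_def)
  have "inner_d d (hh d w j) (hh d w k) =
     inner_d d (ev j) (ev k) - (2 * hv w k / n) * hv w j - (2 * hv w j / n) * hv w k
      + (2 * hv w j / n) * (2 * hv w k / n) * n"
    unfolding hh_def n_def[symmetric] inner_d_lin inner_d_lin2
    using assms by (simp add: inner_ev inner_d_comm[of d "hv w" "ev k"] algebra_simps)
  also have "\<dots> = (if j = k then 1 else 0)"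
    using e by (cases "n = 0") (auto simp: field_simps)
  finally show ?thesis .
qed

lemma hh_Rd: "w \<in> Rd d \<Longrightarrow> k < d \<Longrightarrow> hh d w k \<in> Rd d"
  unfolding Rd_def hh_def hv_def ev_def by auto

lemma hh0:
  assumes "w \<in> Rd d" "inner_d d w w = 1" "0 < d"
  shows "hh d w 0 = w"
proof -
  define n where "n = inner_d d (hv w) (hv w)"
  have n: "n = 2 - 2 * w 0"
    unfolding n_def hv_def inner_d_diff inner_d_diff2
    using assms by (simp add: inner_ev inner_d_comm[of d w "ev 0"]) (simp add: ev_def)
  show ?thesis
  proof (cases "n = 0")
    case True
    have "\<forall>i\<in>{..<d}. hv w i * hv w i = 0"
      using True unfolding n_def inner_d_def
      by (subst sum_nonneg_eq_0_iff[symmetric]) auto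
    then have "hv w = (\<lambda>_. 0)"
    proof (intro ext)
      fix i assume h: "\<forall>i\<in>{..<d}. hv w i * hv w i = 0"
      show "hv w i = 0"
      proof (cases "i < d")
        case True then show ?thesis using h by auto
      next
        case False then show ?thesis using assms(1,3) unfolding Rd_def hv_def ev_def by auto
      qed
    qed
    then have hz: "\<And>i. hv w i = 0" by simp
    then have "\<And>i. ev 0 i = w i" unfolding hv_def by (metis eq_iff_diff_eq_0)
    then show ?thesis unfolding hh_def using hz by (simp add: fun_eq_iff)
  next
    case False
    then have "w 0 \<noteq> 1" using n by auto
    then show ?thesis unfolding hh_def n_def[symmetric] n unfolding hv_def ev_def
      by (auto simp: fun_eq_iff field_simps)
  qed
qed

lemma prob_B:
  fixes M :: "((nat \<Rightarrow> real) \<times> real) measure"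
  assumes d3: "3 \<le> d" and ps: "prob_space M" and sM: "sets M = sets borel"
    and L: "0 < L" and R: "0 < R" and wb: "well_behaved TYPE(3) d (distr M borel fst) L R \<beta>"
    and w: "w \<in> Rd d" and ww: "inner_d d w w = 1" and rho: "0 < \<rho>" "\<rho> \<le> 1"
  shows "L * R^3 * \<rho> / 5 \<le> measure M {p. fst p \<in> {x. \<rho> * R / 2 \<le> inner_d d x w \<and> inner_d d x w \<le> \<rho> * R / sqrt 2}}"
proof -
  define B where "B = {x. \<rho> * R / 2 \<le> inner_d d x w \<and> inner_d d x w \<le> \<rho> * R / sqrt 2}"
  define f :: "3 \<Rightarrow> nat" where "f k = (if k = 1 then 0 else if k = 2 then 1 else 2)" for k
  define u where "u k = hh d w (f k)" for k
  have fl: "f k < d" for k using d3 unfolding f_def by auto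
  have finj: "f j = f k \<Longrightarrow> j = k" for j k
    unfolding f_def using exhaust_3[of j] exhaust_3[of k] by auto
  have uR: "\<forall>i. u i \<in> Rd d" using hh_Rd[OF w fl] unfolding u_def by blast
  have uo: "\<forall>i j. inner_d d (u i) (u j) = (if i = j then 1 else 0)"
    using hh_orth[OF fl fl] finj unfolding u_def by fastforce
  have u1: "u 1 = w" unfolding u_def f_def using hh0[OF w ww] d3 by simp
  define Dx where "Dx = distr M borel fst"
  obtain \<gamma> :: "real^3 \<Rightarrow> real" where gm: "\<gamma> \<in> borel_measurable borel" and gnn: "\<forall>z. 0 \<le> \<gamma> z"
    and gd: "distr Dx lborel (\<lambda>x. \<chi> i. inner_d d (u i) x) = density lborel (\<lambda>z. ennreal (\<gamma> z))"
    and gL: "\<forall>z. norm z \<le> R \<longrightarrow> L \<le> \<gamma> z"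
    using wb uR uo unfolding well_behaved_def Dx_def by blast
  define co where "co = (\<lambda>x. \<chi> i. inner_d d (u i) x)"
  have fstm: "fst \<in> measurable M borel"
    using measurable_cong_sets[OF sM refl] fst_meas by blast
  have com: "co \<in> measurable Dx lborel"
  proof -
    have "co \<in> borel_measurable borel" unfolding co_def
      by (rule borel_measurable_continuous_onI, intro continuous_intros inner_d_cont)
    moreover have "measurable Dx borel = measurable borel (borel :: (real^3) measure)"
      unfolding Dx_def by (rule measurable_cong_sets) simp_all
    ultimately show ?thesis by simp
  qed
  define a :: "real^3" where "a = (\<chi> i. if i = 1 then \<rho> * R / 2 else - R / 2)"
  define b :: "real^3" where "b = (\<chi> i. if i = 1 then \<rho> * R / sqrt 2 else R / 2)"
  have s2a: "1 \<le> sqrt 2" by (rule real_le_rsqrt, simp)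
  have s2c: "sqrt 2 \<le> 10/7" by (rule real_le_lsqrt, simp, simp add: power_divide)
  have s2: "1 \<le> sqrt 2" "sqrt 2 \<le> 2" "sqrt 2 \<le> 10/7" using s2a s2c by auto
  have ab: "\<rho> * R / 2 \<le> \<rho> * R / sqrt 2"
    using rho R s2 by (intro divide_left_mono) auto
  have "a \<in> cbox a b"
    unfolding mem_box_cart a_def b_def using ab R by auto
  then have ne: "cbox a b \<noteq> {}" by blast
  have vol: "measure lborel (cbox a b) = (\<rho> * R / sqrt 2 - \<rho> * R / 2) * R * R"
  proof -
    have p3: "prod (f::3\<Rightarrow>real) UNIV = f 1 * f 2 * f 3" for f
      unfolding UNIV_3 by simp
    have "(3::3) \<noteq> 1" "(2::3) \<noteq> 1" by simp_all
    then show ?thesis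
      using content_cbox_cart[OF ne] by (simp add: p3 a_def b_def)
  qed
  have volb: "\<rho> * R^3 / 5 \<le> (\<rho> * R / sqrt 2 - \<rho> * R / 2) * R * R"
  proof -
    have "1/5 \<le> 1 / sqrt 2 - 1/2" using s2 by (simp add: field_simps)
    then have "\<rho> * R^3 * (1/5) \<le> \<rho> * R^3 * (1 / sqrt 2 - 1/2)"
      using rho R by (intro mult_left_mono) auto
    then show ?thesis by (simp add: algebra_simps power3_eq_cube)
  qed
  have bn: "norm z \<le> R" if "z \<in> cbox a b" for z
  proof -
    have z: "\<rho> * R / 2 \<le> z$1" "z$1 \<le> \<rho> * R / sqrt 2" "-R/2 \<le> z$2" "z$2 \<le> R/2" "-R/2 \<le> z$3" "z$3 \<le> R/2"
    proof -
      have h: "\<forall>i. a$i \<le> z$i \<and> z$i \<le> b$i" using that unfolding mem_box_cart by auto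
      have "(3::3) \<noteq> 1" "(2::3) \<noteq> 1" by simp_all
      then show "\<rho> * R / 2 \<le> z$1" "z$1 \<le> \<rho> * R / sqrt 2" "-R/2 \<le> z$2" "z$2 \<le> R/2" "-R/2 \<le> z$3" "z$3 \<le> R/2"
        using h[rule_format, of 1] h[rule_format, of 2] h[rule_format, of 3] unfolding a_def b_def by auto
    qed
    have "\<rho> * R \<le> 1 * R" using rho R by (intro mult_right_mono) auto
    then have "\<rho> * R / sqrt 2 \<le> R / sqrt 2" by (intro divide_right_mono) auto
    then have "z$1 \<le> R / sqrt 2" using z(2) by linarith
    moreover have "0 \<le> \<rho> * R / 2" using rho R by simp
    then have "0 \<le> z$1" using z(1) by linarith
    ultimately have "(z$1)^2 \<le> (R / sqrt 2)^2" by (intro power_mono) auto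
    then have z1: "(z$1)^2 \<le> R^2 / 2" by (simp add: power_divide)
    have "\<bar>z$2\<bar>^2 \<le> (R/2)^2" using z(3,4) by (intro power_mono) auto
    then have z2: "(z$2)^2 \<le> R^2/4" by (simp add: power_divide)
    have "\<bar>z$3\<bar>^2 \<le> (R/2)^2" using z(5,6) by (intro power_mono) auto
    then have z3: "(z$3)^2 \<le> R^2/4" by (simp add: power_divide)
    have "norm z = sqrt ((z$1)^2 + (z$2)^2 + (z$3)^2)"
      unfolding norm_vec_def L2_set_def sum_3 by (simp add: real_norm_def)
    also have "\<dots> \<le> sqrt (R^2)" using z1 z2 z3 by (intro real_sqrt_le_mono) auto
    finally show ?thesis using R by simp
  qed
  have "ennreal (L * measure lborel (cbox a b)) = (\<integral>\<^sup>+z. ennreal L * indicator (cbox a b) z \<partial>lborel)"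
  proof -
    have fin: "emeasure lborel (cbox a b) = ennreal (measure lborel (cbox a b))"
      by (rule emeasure_eq_ennreal_measure) (use emeasure_lborel_cbox_finite[of a b] in auto)
    show ?thesis
      using L by (simp add: nn_integral_cmult_indicator fin ennreal_mult)
  qed
  also have "\<dots> \<le> (\<integral>\<^sup>+z. ennreal (\<gamma> z) * indicator (cbox a b) z \<partial>lborel)"
    using gL bn by (intro nn_integral_mono) (auto split: split_indicator intro!: ennreal_leI)
  also have "\<dots> = emeasure (density lborel (\<lambda>z. ennreal (\<gamma> z))) (cbox a b)"
    using gm by (subst emeasure_density) auto
  also have "\<dots> = emeasure Dx (co -` cbox a b \<inter> space Dx)"
    unfolding gd[symmetric] co_def[symmetric] by (rule emeasure_distr[OF com]) simp
  also have "\<dots> \<le> emeasure Dx B"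
  proof (rule emeasure_mono)
    show "B \<in> sets Dx" unfolding Dx_def B_def using setB by simp
    show "co -` cbox a b \<inter> space Dx \<subseteq> B"
    proof
      fix x assume "x \<in> co -` cbox a b \<inter> space Dx"
      then have "co x \<in> cbox a b" by blast
      then have "\<forall>i. a$i \<le> co x $ i \<and> co x $ i \<le> b$i" using mem_box_cart(2)[of "co x" a b] by blast
      then have "a$1 \<le> co x $ 1 \<and> co x $ 1 \<le> b$1" by blast
      then show "x \<in> B" unfolding B_def co_def a_def b_def by (simp add: u1 inner_d_comm[of d x w])
    qed
  qed
  also have "\<dots> = emeasure M {p. fst p \<in> B}"
    unfolding Dx_def using fstm setB[of "\<rho> * R / 2" d w "\<rho> * R / sqrt 2"]
    by (subst emeasure_distr) (auto simp: B_def sets_eq_imp_space_eq[OF sM] vimage_def)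
  also have "\<dots> = ennreal (measure M {p. fst p \<in> B})"
  proof -
    interpret prob_space M by (rule ps)
    show ?thesis by (rule emeasure_eq_measure)
  qed
  finally have "L * measure lborel (cbox a b) \<le> measure M {p. fst p \<in> B}"
    using ennreal_le_iff[OF measure_nonneg] by blast
  moreover have "L * R^3 * \<rho> / 5 \<le> L * measure lborel (cbox a b)"
  proof -
    have "L * (\<rho> * R^3 / 5) \<le> L * measure lborel (cbox a b)"
      by (rule mult_left_mono) (use volb vol L in auto)
    moreover have "L * R^3 * \<rho> / 5 = L * (\<rho> * R^3 / 5)" by (simp add: field_simps)
    ultimately show ?thesis by linarith
  qed
  ultimately show ?thesis unfolding B_def by linarith
qed

lemma main:
  fixes M :: "((nat \<Rightarrow> real) \<times> real) measure"
  assumes d3: "3 \<le> d" and ps: "prob_space M" and sM: "sets M = sets borel"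
    and L: "0 < L" and R: "0 < R" and wb: "well_behaved TYPE(3) d (distr M borel fst) L R \<beta>"
    and w: "w \<in> Rd d" and ww: "inner_d d w w = 1" and rho: "0 < \<rho>" "\<rho> \<le> 1" and C: "0 < C'"
    and Bd: "B = {x. \<rho> * R / 2 \<le> inner_d d x w \<and> inner_d d x w \<le> \<rho> * R / sqrt 2}"
    and Sd: "S = {z. - t1 \<le> inner_d d v z \<and> inner_d d v z \<le> - t2}"
    and hyp: "(\<integral>p. indicator S (fst p) * snd p \<partial>(cond_push M B (persp d w))) < - C'"
  shows "(\<integral>p. (if fst p \<in> B \<and> persp d w (fst p) \<in> S then 1 / inner_d d w (fst p) else 0) * snd p * inner_d d w (fst p) \<partial>M)
     \<le> - (1/5) * C' * L * R ^ 3 * \<rho>"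
proof -
  define A where "A = {p::(nat \<Rightarrow> real) \<times> real. fst p \<in> B}"
  define P where "P = measure M A"
  have PL: "L * R^3 * \<rho> / 5 \<le> P"
    unfolding P_def A_def Bd using prob_B[OF d3 ps sM L R wb w ww rho] .
  have "0 < L * R^3 * \<rho> / 5" using L R rho by simp
  then have Ppos: "0 < P" using PL by linarith
  have Bs: "B \<in> sets borel" unfolding Bd by (rule setB)
  have Ss: "S \<in> sets borel" unfolding Sd by (rule setS)
  have As: "A \<in> sets M" unfolding sM A_def using Bs by measurable
  define g where "g p = indicator S (persp d w (fst p)) * snd p" for p :: "(nat \<Rightarrow> real) \<times> real"
  have gb: "g \<in> borel_measurable borel" unfolding g_def using Ss by measurable
  have gm: "g \<in> borel_measurable M" using gb measurable_cong_sets[OF sM refl] by blast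
  have Am: "(\<lambda>p. indicator A p / P) \<in> borel_measurable M" using As by measurable
  have mapm: "(\<lambda>p. (persp d w (fst p), snd p)) \<in> measurable (cond_meas M A) borel"
  proof -
    have "(\<lambda>p::(nat \<Rightarrow> real) \<times> real. (persp d w (fst p), snd p)) \<in> borel_measurable borel" by measurable
    moreover have "sets (cond_meas M A) = sets borel" unfolding cond_meas_def using sM by simp
    ultimately show ?thesis using measurable_cong_sets[of "cond_meas M A" borel borel borel] by blast
  qed
  have fb: "(\<lambda>p::(nat \<Rightarrow> real) \<times> real. indicator S (fst p) * snd p) \<in> borel_measurable borel"
    using Ss by measurable
  have "(\<integral>p. indicator S (fst p) * snd p \<partial>(cond_push M B (persp d w)))
      = (\<integral>p. g p \<partial>(cond_meas M A))"
    unfolding cond_push_def A_def[symmetric] g_def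
    by (subst integral_distr[OF mapm fb]) simp
  also have "\<dots> = (\<integral>p. (indicator A p / P) * g p \<partial>M)"
    unfolding cond_meas_def P_def[symmetric]
    by (subst integral_density[OF gm Am]) (auto simp: Ppos less_imp_le)
  also have "\<dots> = (1 / P) * (\<integral>p. indicator A p * g p \<partial>M)"
    by (simp add: integral_mult_right_zero[symmetric] mult.assoc)
  finally have X: "(1 / P) * (\<integral>p. indicator A p * g p \<partial>M) < - C'" using hyp by simp
  have eq: "(\<integral>p. (if fst p \<in> B \<and> persp d w (fst p) \<in> S then 1 / inner_d d w (fst p) else 0) * snd p * inner_d d w (fst p) \<partial>M)
      = (\<integral>p. indicator A p * g p \<partial>M)"
  proof (rule Bochner_Integration.integral_cong[OF refl])
    fix p :: "(nat \<Rightarrow> real) \<times> real"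
    show "(if fst p \<in> B \<and> persp d w (fst p) \<in> S then 1 / inner_d d w (fst p) else 0) * snd p * inner_d d w (fst p)
        = indicator A p * g p"
    proof (cases "fst p \<in> B")
      case True
      then have "\<rho> * R / 2 \<le> inner_d d w (fst p)" unfolding Bd by (simp add: inner_d_comm[of d w])
      moreover have "0 < \<rho> * R / 2" using rho R by simp
      ultimately have "inner_d d w (fst p) \<noteq> 0" by linarith
      then show ?thesis using True unfolding A_def g_def by (auto simp: indicator_def)
    next
      case False
      then show ?thesis unfolding A_def g_def by (auto simp: indicator_def)
    qed
  qed
  define I where "I = (\<integral>p. indicator A p * g p \<partial>M)"
  have "I < - C' * P" using X Ppos unfolding I_def[symmetric] by (simp add: field_simps)
  also have "- C' * P \<le> - C' * (L * R^3 * \<rho> / 5)" using PL C by simp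
  finally show ?thesis unfolding eq I_def[symmetric] by simp
qed
theorem mainTheorem8:
  shows "\<exists>c0>0. \<forall>(d::nat) (M::((nat \<Rightarrow> real) \<times> real) measure) (L::real) (R::real) (\<beta>::real)
           (w::nat \<Rightarrow> real) (\<rho>::real) (v::nat \<Rightarrow> real) (t1::real) (t2::real) (C'::real).
    (3 \<le> d \<and> prob_space M \<and> sets M = sets borel \<and>
    (AE p in M. fst p \<in> Rd d) \<and> (AE p in M. snd p \<in> {-1, 1}) \<and>
    0 < L \<and> 0 < R \<and> 1 \<le> \<beta> \<and>
    well_behaved TYPE(3) d (distr M borel fst) L R \<beta> \<and>
    w \<in> Rd d \<and> inner_d d w w = 1 \<and> 0 < \<rho> \<and> \<rho> \<le> 1 \<and>
    v \<in> Rd d \<and> inner_d d v w = 0 \<and> 0 < t1 \<and> 0 < t2 \<and> 0 < C') \<longrightarrow>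
    (let B = {x. \<rho> * R / 2 \<le> inner_d d x w \<and> inner_d d x w \<le> \<rho> * R / sqrt 2};
         S = {z. - t1 \<le> inner_d d v z \<and> inner_d d v z \<le> - t2};
         T = (\<lambda>x. if x \<in> B \<and> persp d w x \<in> S then 1 / inner_d d w x else 0)
     in (\<integral>p. indicator S (fst p) * snd p \<partial>(cond_push M B (persp d w))) < - C'
        \<longrightarrow> (\<integral>p. T (fst p) * snd p * inner_d d w (fst p) \<partial>M) \<le> - c0 * C' * L * R ^ 3 * \<rho>)"
  apply (rule exI[of _ "1/5"])
  apply (simp only: Let_def)
  apply (intro conjI allI impI)
   apply simp
  apply (elim conjE)
  apply (rule main[OF _ _ _ _ _ _ _ _ _ _ _ refl refl]; assumption)
  done

end
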